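(* Let $\mathbb{I}=\{0,\dots,N-1\}$ with the linear adjacency ($i$ adjacent to $i+1$ for $0\le i\le N-2$), let $L$ be a finite totally ordered set and let $x:\mathbb{I}\to L$ be surjective. For $l\in L$, two connected components merge together at level $l$ in the sublevel set filtration (i.e. there exist two distinct connected components of $L_{<l}$ that are contained in the same connected component of $L_{<l}\cup L_l$) if and only if $l$ is the level of a local (flat) maximum $x[m],x[m+1],\dots,x[n]$ with $m\neq 0$ and $n\neq N-1$, i.e. there exist $1\le m\le n\le N-2$ with $x[m]=\dots=x[n]=l$, $x[m-1]<l$ and $x[n+1]<l$.
   Context: $L_l=\{i:x[i]=l\}$, $L_{<l}=\{i:x[i]<l\}$. A subset $S\subseteq\mathbb{I}$ is connected if it is nonempty and any two of its elements are joined by a chain of elements of $S$ with consecutive elements adjacent; connected components are maximal connected subsets. A local (flat) maximum at level $l$ is a maximal run of consecutive indices with value $l$ whose existing outer neighbours all have value strictly less than $l$. *)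

theory Defs
  imports Main
begin

definition adjacent :: "nat \<Rightarrow> nat \<Rightarrow> bool" where
  "adjacent i j \<longleftrightarrow> j = Suc i \<or> i = Suc j"

definition chain_in :: "nat set \<Rightarrow> nat list \<Rightarrow> bool" where
  "chain_in S ps \<longleftrightarrow> ps \<noteq> [] \<and> set ps \<subseteq> S \<and>
     (\<forall>k. Suc k < length ps \<longrightarrow> adjacent (ps ! k) (ps ! Suc k))"

definition idx_connected :: "nat set \<Rightarrow> bool" where
  "idx_connected S \<longleftrightarrow> S \<noteq> {} \<and>
     (\<forall>i\<in>S. \<forall>j\<in>S. \<exists>ps. chain_in S ps \<and> hd ps = i \<and> last ps = j)"

definition idx_component :: "nat set \<Rightarrow> nat set \<Rightarrow> bool" where
  "idx_component S C \<longleftrightarrow> C \<subseteq> S \<and> idx_connected C \<and>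
     (\<forall>D. C \<subseteq> D \<and> D \<subseteq> S \<and> idx_connected D \<longrightarrow> D = C)"

definition level_set :: "nat \<Rightarrow> (nat \<Rightarrow> 'l) \<Rightarrow> 'l \<Rightarrow> nat set" where
  "level_set N x l = {i. i < N \<and> x i = l}"

definition sublevel_set :: "nat \<Rightarrow> (nat \<Rightarrow> 'l::order) \<Rightarrow> 'l \<Rightarrow> nat set" where
  "sublevel_set N x l = {i. i < N \<and> x i < l}"

definition merge_at :: "nat \<Rightarrow> (nat \<Rightarrow> 'l::order) \<Rightarrow> 'l \<Rightarrow> bool" where
  "merge_at N x l \<longleftrightarrow> (\<exists>C1 C2 D. idx_component (sublevel_set N x l) C1 \<and>
      idx_component (sublevel_set N x l) C2 \<and> C1 \<noteq> C2 \<and>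
      idx_component (sublevel_set N x l \<union> level_set N x l) D \<and> C1 \<subseteq> D \<and> C2 \<subseteq> D)"

definition interior_flat_max :: "nat \<Rightarrow> (nat \<Rightarrow> 'l::order) \<Rightarrow> 'l \<Rightarrow> bool" where
  "interior_flat_max N x l \<longleftrightarrow> (\<exists>m n. 1 \<le> m \<and> m \<le> n \<and> n + 2 \<le> N \<and>
      (\<forall>k. m \<le> k \<and> k \<le> n \<longrightarrow> x k = l) \<and> x (m - 1) < l \<and> x (Suc n) < l)"

end

theory Submission
  imports Defs
begin

definition cvx :: "nat set \<Rightarrow> bool" where
  "cvx S \<longleftrightarrow> (\<forall>i\<in>S. \<forall>j\<in>S. \<forall>k. i \<le> k \<and> k \<le> j \<longrightarrow> k \<in> S)"

lemma chain_Cons2: "chain_in S (a # b # rest) \<longleftrightarrow> a \<in> S \<and> adjacent a b \<and> chain_in S (b # rest)"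
proof
  assume h: "chain_in S (a # b # rest)"
  then have all: "\<And>k. Suc k < length (a # b # rest) \<Longrightarrow> adjacent ((a # b # rest) ! k) ((a # b # rest) ! Suc k)"
    and st: "set (a # b # rest) \<subseteq> S" unfolding chain_in_def by blast+
  have "adjacent a b" using all[of 0] by simp
  moreover have "chain_in S (b # rest)" unfolding chain_in_def
  proof (intro conjI allI impI)
    fix k assume "Suc k < length (b # rest)"
    then show "adjacent ((b # rest) ! k) ((b # rest) ! Suc k)" using all[of "Suc k"] by simp
  qed (use st in auto)
  ultimately show "a \<in> S \<and> adjacent a b \<and> chain_in S (b # rest)" using st by simp
next
  assume h: "a \<in> S \<and> adjacent a b \<and> chain_in S (b # rest)"
  then have all: "\<And>k. Suc k < length (b # rest) \<Longrightarrow> adjacent ((b # rest) ! k) ((b # rest) ! Suc k)"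
    and st: "set (b # rest) \<subseteq> S" unfolding chain_in_def by blast+
  show "chain_in S (a # b # rest)" unfolding chain_in_def
  proof (intro conjI allI impI)
    fix k assume k: "Suc k < length (a # b # rest)"
    show "adjacent ((a # b # rest) ! k) ((a # b # rest) ! Suc k)"
    proof (cases k)
      case 0 then show ?thesis using h by simp
    next
      case (Suc k') then show ?thesis using all[of k'] k by simp
    qed
  qed (use h st in auto)
qed

lemma chain_between:
  "chain_in S ps \<Longrightarrow> min (hd ps) (last ps) \<le> k \<Longrightarrow> k \<le> max (hd ps) (last ps) \<Longrightarrow> k \<in> S"
proof (induction ps)
  case Nil then show ?case by (simp add: chain_in_def)
next
  case (Cons a rest)
  show ?case
  proof (cases rest)
    case Nil then show ?thesis using Cons.prems by (auto simp: chain_in_def)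
  next
    case (Cons b r)
    have c: "a \<in> S" "adjacent a b" "chain_in S rest"
      using Cons.prems(1) chain_Cons2 Cons by auto
    show ?thesis
    proof (cases "k = a")
      case True then show ?thesis using c by simp
    next
      case False
      have "min (hd rest) (last rest) \<le> k \<and> k \<le> max (hd rest) (last rest)"
        using Cons.prems(2,3) False c(2) Cons unfolding adjacent_def by auto
      then show ?thesis using Cons.IH c(3) by blast
    qed
  qed
qed

lemma conn_iff: "idx_connected S \<longleftrightarrow> S \<noteq> {} \<and> cvx S"
proof
  assume h: "idx_connected S"
  have "cvx S" unfolding cvx_def
  proof (intro ballI allI impI)
    fix i j k assume "i \<in> S" "j \<in> S" "i \<le> k \<and> k \<le> j"
    then obtain ps where "chain_in S ps" "hd ps = i" "last ps = j" using h unfolding idx_connected_def by blast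
    then show "k \<in> S" using chain_between[of S ps k] \<open>i \<le> k \<and> k \<le> j\<close> by simp
  qed
  moreover have "S \<noteq> {}" using h unfolding idx_connected_def by blast
  ultimately show "S \<noteq> {} \<and> cvx S" by blast
next
  assume h: "S \<noteq> {} \<and> cvx S"
  show "idx_connected S" unfolding idx_connected_def
  proof (intro conjI ballI)
    fix i j assume ij: "i \<in> S" "j \<in> S"
    show "\<exists>ps. chain_in S ps \<and> hd ps = i \<and> last ps = j"
    proof (cases "i \<le> j")
      case True
      define ps where "ps = map (\<lambda>t. i + t) [0..<Suc (j - i)]"
      have len: "length ps = Suc (j - i)" unfolding ps_def by simp
      have nth: "ps ! k = i + k" if "k < Suc (j - i)" for k
        unfolding ps_def using that by (simp del: upt_Suc)
      have "chain_in S ps" unfolding chain_in_def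
      proof (intro conjI allI impI)
        show "ps \<noteq> []" using len by auto
        show "set ps \<subseteq> S"
        proof
          fix y assume "y \<in> set ps"
          then obtain k where "k < length ps" "y = ps ! k" by (metis in_set_conv_nth)
          then have "y = i + k" "k \<le> j - i" using nth len by auto
          then have "i \<le> y \<and> y \<le> j" using True by linarith
          then show "y \<in> S" using h ij unfolding cvx_def by blast
        qed
        fix k assume "Suc k < length ps"
        then show "adjacent (ps ! k) (ps ! Suc k)" using nth len unfolding adjacent_def by simp
      qed
      moreover have "hd ps = i"
      proof -
        have "ps \<noteq> []" using len by auto
        then show ?thesis using nth[of 0] hd_conv_nth[of ps] by simp
      qed
      moreover have "last ps = j"
      proof -
        have "ps \<noteq> []" using len by auto
        then show ?thesis using nth[of "j - i"] len True last_conv_nth[of ps] by simp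
      qed
      ultimately show ?thesis by blast
    next
      case False
      define ps where "ps = map (\<lambda>t. i - t) [0..<Suc (i - j)]"
      have len: "length ps = Suc (i - j)" unfolding ps_def by simp
      have nth: "ps ! k = i - k" if "k < Suc (i - j)" for k
        unfolding ps_def using that by (simp del: upt_Suc)
      have "chain_in S ps" unfolding chain_in_def
      proof (intro conjI allI impI)
        show "ps \<noteq> []" using len by auto
        show "set ps \<subseteq> S"
        proof
          fix y assume "y \<in> set ps"
          then obtain k where "k < length ps" "y = ps ! k" by (metis in_set_conv_nth)
          then have "y = i - k" "k \<le> i - j" using nth len by auto
          then have "j \<le> y \<and> y \<le> i" using False by linarith
          then show "y \<in> S" using h ij unfolding cvx_def by blast
        qed
        fix k assume "Suc k < length ps"
        then show "adjacent (ps ! k) (ps ! Suc k)" using nth len False unfolding adjacent_def by (simp; linarith)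
      qed
      moreover have "hd ps = i"
      proof -
        have "ps \<noteq> []" using len by auto
        then show ?thesis using nth[of 0] hd_conv_nth[of ps] by simp
      qed
      moreover have "last ps = j"
      proof -
        have "ps \<noteq> []" using len by auto
        then show ?thesis using nth[of "i - j"] len False last_conv_nth[of ps] by simp
      qed
      ultimately show ?thesis by blast
    qed
  next
    show "S \<noteq> {}" using h by blast
  qed
qed

lemma cvx_union: "cvx C \<Longrightarrow> cvx D \<Longrightarrow> p \<in> C \<Longrightarrow> p \<in> D \<Longrightarrow> cvx (C \<union> D)"
  unfolding cvx_def
proof (intro ballI allI impI)
  fix i j k assume a: "\<forall>i\<in>C. \<forall>j\<in>C. \<forall>k. i \<le> k \<and> k \<le> j \<longrightarrow> k \<in> C"
    "\<forall>i\<in>D. \<forall>j\<in>D. \<forall>k. i \<le> k \<and> k \<le> j \<longrightarrow> k \<in> D" "p \<in> C" "p \<in> D"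
    "i \<in> C \<union> D" "j \<in> C \<union> D" "i \<le> k \<and> k \<le> j"
  show "k \<in> C \<union> D"
  proof (cases "k \<le> p")
    case True
    then show ?thesis using a by (metis UnE UnI1 UnI2 nle_le order_trans)
  next
    case False
    then show ?thesis using a by (metis UnE UnI1 UnI2 nle_le order_trans)
  qed
qed

lemma comp_exists:
  assumes "finite S" "C0 \<subseteq> S" "C0 \<noteq> {}" "cvx C0"
  shows "\<exists>C. idx_component S C \<and> C0 \<subseteq> C"
proof -
  let ?P = "\<lambda>C. C0 \<subseteq> C \<and> C \<subseteq> S \<and> cvx C"
  have p0: "?P C0" using assms by simp
  have bd: "\<forall>y. ?P y \<longrightarrow> card y < Suc (card S)"
  proof (intro allI impI)
    fix y assume "?P y"
    then show "card y < Suc (card S)" using card_mono[OF assms(1)] by (simp add: le_imp_less_Suc)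
  qed
  obtain C where C: "?P C" "\<And>y. ?P y \<Longrightarrow> card y \<le> card C"
    using ex_has_greatest_nat[of ?P C0 card "Suc (card S)", OF p0 bd] by blast
  have "idx_component S C" unfolding idx_component_def conn_iff
  proof (intro conjI allI impI)
    fix D assume D: "C \<subseteq> D \<and> D \<subseteq> S \<and> D \<noteq> {} \<and> cvx D"
    then have P: "?P D" using C by blast
    have "card D \<le> card C" using C(2)[OF P] .
    moreover have "finite D" using D assms(1) finite_subset by blast
    moreover have "card C \<le> card D" using card_mono[OF \<open>finite D\<close>] D by blast
    ultimately have "card C = card D" by simp
    then show "D = C" using D card_subset_eq[OF \<open>finite D\<close>, of C] by simp
  next
    show "C \<subseteq> S" using C by simp
  next
    show "C \<noteq> {}" using C assms(3) by blast
  next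
    show "cvx C" using C by simp
  qed
  then show ?thesis using C by blast
qed

lemma comp_sub:
  assumes "idx_component A C" "A \<subseteq> B" "idx_component B D" "p \<in> C" "p \<in> D"
  shows "C \<subseteq> D"
proof -
  have cC: "cvx C" "C \<subseteq> A" using assms(1) unfolding idx_component_def conn_iff by auto
  have cD: "cvx D" "D \<subseteq> B" and mx: "\<And>E. D \<subseteq> E \<and> E \<subseteq> B \<and> idx_connected E \<Longrightarrow> E = D"
    using assms(3) unfolding idx_component_def conn_iff by auto
  have "cvx (C \<union> D)" using cvx_union[OF cC(1) cD(1) assms(4,5)] .
  then have "idx_connected (C \<union> D)" unfolding conn_iff using assms(4) by blast
  moreover have "C \<union> D \<subseteq> B" using cC cD assms(2) by blast
  ultimately have "C \<union> D = D" using mx[of "C \<union> D"] by blast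
  then show ?thesis by blast
qed

lemma comp_facts:
  assumes "idx_component S C"
  shows "C \<subseteq> S" "cvx C" "C \<noteq> {}"
  using assms by (simp_all add: idx_component_def conn_iff)

lemma comp_max:
  assumes "idx_component S C" "C \<subseteq> D" "D \<subseteq> S" "D \<noteq> {}" "cvx D"
  shows "D = C"
  using assms unfolding idx_component_def conn_iff by blast

lemma core:
  fixes x :: "nat \<Rightarrow> 'l::linorder"
  assumes C1: "idx_component (sublevel_set N x l) C1" and C2: "idx_component (sublevel_set N x l) C2"
    and disj: "C1 \<inter> C2 = {}"
    and D: "idx_component (sublevel_set N x l \<union> level_set N x l) D" "C1 \<subseteq> D" "C2 \<subseteq> D"
    and ij: "i < j" "i \<in> C1" "j \<in> C2"
  shows "interior_flat_max N x l"
proof -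
  let ?A = "sublevel_set N x l"
  have iA: "i < N" "x i < l" using ij comp_facts(1)[OF C1] unfolding sublevel_set_def by auto
  have jA: "j < N" "x j < l" using ij comp_facts(1)[OF C2] unfolding sublevel_set_def by auto
  have cD: "cvx D" using comp_facts(2)[OF D(1)] .
  have DB: "D \<subseteq> sublevel_set N x l \<union> level_set N x l" using comp_facts(1)[OF D(1)] .
  have inB: "x k \<le> l" if "i \<le> k" "k \<le> j" for k
  proof -
    have "k \<in> D" using cD ij D that unfolding cvx_def by blast
    then show ?thesis using DB unfolding sublevel_set_def level_set_def by auto
  qed
  have "\<exists>k. i \<le> k \<and> k \<le> j \<and> \<not> x k < l"
  proof (rule ccontr)
    assume "\<not> ?thesis"
    then have sub: "{i..j} \<subseteq> ?A" using jA unfolding sublevel_set_def by auto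
    have "cvx {i..j}" unfolding cvx_def by auto
    then have "cvx (C1 \<union> {i..j})" using cvx_union[of C1 "{i..j}" i] comp_facts(2)[OF C1] ij by auto
    moreover have "C1 \<union> {i..j} \<subseteq> ?A" using sub comp_facts(1)[OF C1] by blast
    ultimately have "C1 \<union> {i..j} = C1" using comp_max[OF C1, of "C1 \<union> {i..j}"] by blast
    then show False using ij disj by auto
  qed
  then obtain k0 where k0': "i \<le> k0" "k0 \<le> j" "\<not> x k0 < l" by blast
  have "k0 \<noteq> i" using k0'(3) iA(2) by blast
  then have k0: "i < k0" "k0 \<le> j" "\<not> x k0 < l" using k0' by simp_all
  define m where "m = (LEAST k. i < k \<and> k \<le> j \<and> \<not> x k < l)"
  have m: "i < m" "m \<le> j" "\<not> x m < l" using LeastI[of "\<lambda>k. i < k \<and> k \<le> j \<and> \<not> x k < l" k0] k0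
    unfolding m_def by auto
  have mlow: "x k < l" if "i < k" "k < m" for k
    using not_less_Least[of k "\<lambda>k. i < k \<and> k \<le> j \<and> \<not> x k < l"] that m unfolding m_def by auto
  have "m \<noteq> j" using m(3) jA(2) by blast
  then have mj: "m < j" using m(2) by simp
  have xm1: "x (m - 1) < l"
  proof (cases "m - 1 = i")
    case True then show ?thesis using iA by simp
  next
    case False then show ?thesis using mlow m by auto
  qed
  have xm: "x m = l" using m inB[of m] by auto
  define n where "n = (LEAST t. m \<le> t \<and> x (Suc t) < l)"
  have j1: "m \<le> j - 1 \<and> x (Suc (j - 1)) < l" using mj jA by auto
  have n: "m \<le> n" "x (Suc n) < l" using LeastI[of "\<lambda>t. m \<le> t \<and> x (Suc t) < l", OF j1] unfolding n_def by auto
  have nj: "n \<le> j - 1" using Least_le[of "\<lambda>t. m \<le> t \<and> x (Suc t) < l", OF j1] unfolding n_def by auto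
  have run: "x k = l" if "m \<le> k" "k \<le> n" for k
  proof (cases "k = m")
    case True then show ?thesis using xm by simp
  next
    case False
    then have "m \<le> k - 1" "k - 1 < n" using that by auto
    then have "\<not> x (Suc (k - 1)) < l"
      using not_less_Least[of "k - 1" "\<lambda>t. m \<le> t \<and> x (Suc t) < l"] unfolding n_def by auto
    moreover have "Suc (k - 1) = k" using False that by auto
    moreover have "x k \<le> l" using inB[of k] that m nj by auto
    ultimately show ?thesis by auto
  qed
  have "1 \<le> m" using m by simp
  moreover have "n + 2 \<le> N" using nj mj jA by linarith
  ultimately show ?thesis unfolding interior_flat_max_def
    using n(1) n(2) run xm1 by blast
qed

theorem mainTheorem5:
  fixes N :: nat and x :: "nat \<Rightarrow> 'l::{linorder,finite}" and l :: 'l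
  assumes surj: "x ` {..<N} = UNIV"
  shows "merge_at N x l \<longleftrightarrow> interior_flat_max N x l"
proof
  assume "merge_at N x l"
  then obtain C1 C2 D where h: "idx_component (sublevel_set N x l) C1"
      "idx_component (sublevel_set N x l) C2" "C1 \<noteq> C2"
      "idx_component (sublevel_set N x l \<union> level_set N x l) D" "C1 \<subseteq> D" "C2 \<subseteq> D"
    unfolding merge_at_def by blast
  have disj: "C1 \<inter> C2 = {}"
  proof (rule ccontr)
    assume "C1 \<inter> C2 \<noteq> {}"
    then obtain p where "p \<in> C1" "p \<in> C2" by blast
    then have "C1 \<subseteq> C2" "C2 \<subseteq> C1"
      using comp_sub[OF h(1) order_refl h(2)] comp_sub[OF h(2) order_refl h(1)] by blast+
    then show False using h by blast
  qed
  have "C1 \<noteq> {}" "C2 \<noteq> {}" using comp_facts(3)[OF h(1)] comp_facts(3)[OF h(2)] by auto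
  then obtain i j where "i \<in> C1" "j \<in> C2" by blast
  moreover have "i \<noteq> j" using disj calculation by blast
  ultimately consider "i < j" | "j < i" by (meson linorder_neqE_nat)
  then show "interior_flat_max N x l"
  proof cases
    case 1 then show ?thesis using core[OF h(1) h(2) disj h(4) h(5) h(6)] \<open>i \<in> C1\<close> \<open>j \<in> C2\<close> by blast
  next
    case 2
    have d2: "C2 \<inter> C1 = {}" using disj by blast
    show ?thesis using 2 core[OF h(2) h(1) d2 h(4) h(6) h(5)] \<open>i \<in> C1\<close> \<open>j \<in> C2\<close> by blast
  qed
next
  assume "interior_flat_max N x l"
  then obtain m n where mn: "1 \<le> m" "m \<le> n" "n + 2 \<le> N" "\<And>k. m \<le> k \<and> k \<le> n \<Longrightarrow> x k = l"
      "x (m - 1) < l" "x (Suc n) < l"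
    unfolding interior_flat_max_def by blast
  let ?A = "sublevel_set N x l" and ?B = "sublevel_set N x l \<union> level_set N x l"
  have fA: "finite ?A" "finite ?B" unfolding sublevel_set_def level_set_def by auto
  have cs: "cvx {a}" for a unfolding cvx_def by auto
  have ci: "cvx {a..b}" for a b unfolding cvx_def by auto
  have m1: "m - 1 \<in> ?A" "Suc n \<in> ?A" using mn unfolding sublevel_set_def by auto
  obtain C1 where C1: "idx_component ?A C1" "m - 1 \<in> C1"
    using comp_exists[OF fA(1), of "{m-1}"] cs m1 by auto
  obtain C2 where C2: "idx_component ?A C2" "Suc n \<in> C2"
    using comp_exists[OF fA(1), of "{Suc n}"] cs m1 by auto
  have "{m-1..Suc n} \<subseteq> ?B"
  proof
    fix k assume k: "k \<in> {m-1..Suc n}"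
    have N: "k < N" using k mn(3) by simp
    have "k = m - 1 \<or> k = Suc n \<or> (m \<le> k \<and> k \<le> n)" using k mn(1) by auto
    then have "x k \<le> l" using mn(4,5,6) by (metis order_le_less order_refl)
    then show "k \<in> ?B" using N unfolding sublevel_set_def level_set_def by auto
  qed
  then obtain D where D: "idx_component ?B D" "{m-1..Suc n} \<subseteq> D"
    using comp_exists[OF fA(2), of "{m-1..Suc n}"] ci mn(2) by force
  have inD: "m - 1 \<in> D" "Suc n \<in> D" using D(2) mn(2) by auto
  have "C1 \<subseteq> D" using comp_sub[OF C1(1) Un_upper1 D(1) C1(2) inD(1)] .
  moreover have "C2 \<subseteq> D" using comp_sub[OF C2(1) Un_upper1 D(1) C2(2) inD(2)] .
  moreover have "C1 \<noteq> C2"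
  proof
    assume "C1 = C2"
    have b: "m - 1 \<le> m \<and> m \<le> Suc n" using mn(2) by simp
    have "m \<in> C1" using comp_facts(2)[OF C1(1)] C1(2) C2(2) \<open>C1 = C2\<close> b unfolding cvx_def by blast
    then have "x m < l" using comp_facts(1)[OF C1(1)] unfolding sublevel_set_def by blast
    moreover have "x m = l" using mn(2,4) by blast
    ultimately show False by simp
  qed
  ultimately show "merge_at N x l" unfolding merge_at_def
    using C1(1) C2(1) D(1) by (intro exI[of _ C1] exI[of _ C2] exI[of _ D]) simp
qed

end
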